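(* At the end of any iteration of the main loop of MAPTree, for every OR node $u\in\mathcal G'$ such that some partial solution rooted at $u$ in $\mathcal G'$ exists, $\mathrm{getSolution}(u)$ returns a minimum-cost partial solution rooted at $u$ in $\mathcal G'$.
   Context: Let $x_1,\dots,x_N\in\{0,1\}^F$ be a binary dataset $\mathcal X$ with labels $\mathcal Y\in\{0,1\}^N$, $[N]=\{1,\dots,N\}$. For $\mathcal I\subseteq[N]$, $f\in[F]$, $k\in\{0,1\}$ let $\mathcal I|_{f=k}=\{i\in\mathcal I:(x_i)_f=k\}$, $c^k(\mathcal I)=|\{i\in\mathcal I:y_i=k\}|$, $\mathcal V(\mathcal I)=\{f:\mathcal I|_{f=0}\neq\emptyset\text{ and }\mathcal I|_{f=1}\neq\emptyset\}$. Fix $\rho^1,\rho^0>0$, $\alpha\in(0,1)$, $\beta\ge0$; $\ell_{\rm leaf}(c^1,c^0)=B(c^1+\rho^1,c^0+\rho^0)/B(\rho^1,\rho^0)$ ($B$ the Beta function), $p_{\rm split}(d)=\alpha(1+d)^{-\beta}$, $p_{\rm leaf}(d,\mathcal I)=1$ if $\mathcal V(\mathcal I)=\emptyset$ else $1-p_{\rm split}(d)$, $p_{\rm inner}(d,\mathcal I)=0$ if $\mathcal V(\mathcal I)=\emptyset$ else $p_{\rm split}(d)/|\mathcal V(\mathcal I)|$; $-\log0=+\infty$, and a minimum over an empty set is $+\infty$. Graph $\mathcal G=\mathcal G_{\mathcal X,\mathcal Y}$: for nonempty $\mathcal I\subseteq[N]$, $d\in\{0,\dots,F\}$, an OR node $o_{\mathcal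 I,d}$ with terminal child $t_{\mathcal I,d}$ (edge cost $-\log p_{\rm leaf}(d,\mathcal I)-\log\ell_{\rm leaf}(c^1(\mathcal I),c^0(\mathcal I))$); for $d<F$, $f\in\mathcal V(\mathcal I)$, an AND child $a_{\mathcal I,d,f}$ (edge cost $-\log p_{\rm inner}(d,\mathcal I)$) with cost-$0$ edges to $o_{\mathcal I|_{f=0},d+1}$, $o_{\mathcal I|_{f=1},d+1}$; root $r=o_{[N],0}$; only nodes reachable from $r$ kept. A partial solution rooted at an OR node $u$ in $\mathcal G'$ is a set $\mathcal S\subseteq\mathcal G'$ containing $u$, all of whose nodes are reachable from $u$ inside $\mathcal S$, such that every AND node of $\mathcal S$ has both children in $\mathcal S$ and every OR node of $\mathcal S$ has exactly one child in $\mathcal S$; its cost is the sum of the costs of edges $v\to w$ with $v,w\in\mathcal S$. Heuristic: $h(o_{\mathcal I,d})=-\max\{\log\ell_{\rm leaf}(c^1(\mathcal I),c^0(\mathcal I)),\log p_{\rm split}(d)+\log\ell_{\rm leaf}(c^1(\mathcal I),0)+\log\ell_{\rm leaf}(0,c^0(\mathcal I))\}$. MAPTree maintains a node set $\mathcal G'$, a set $\mathcal E$ of expanded OR nodes, and values $LB[u],UB[u]\in\mathbb R\cup\{+\infty\}$ for OR nodes ($UB[u]=+\infty$ until set); for an AND node $a$ with children $o_0,o_1$, $LB[a]=LB[o_0]+LB[o_1]$ and $UB[a]=UB[o_0]+UB[o_1]$. Initialize $\mathcal G'=\{r\}$, $\mathcal E=\emptyset$, $LB[r]=h(r)$, $UB[r]=+\infty$.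 While $LB[r]<UB[r]$ (and optionally while time remains): (1) $o:=r$; while $o\in\mathcal E$, choose an AND child $a^*$ of $o$ minimizing $\mathrm{cost}(o,a)+LB[a]$, with children $o_0$ (value-0 side) and $o_1$, and set $o:=o_0$ if $UB[o_0]-LB[o_0]>UB[o_1]-LB[o_1]$, else $o:=o_1$. (2) Add $o$ to $\mathcal E$ and its terminal child to $\mathcal G'$; for each AND child $a$ of $o$ with children $o_0,o_1$, add $a,o_0,o_1$ to $\mathcal G'$ and set $LB[o_0]:=h(o_0)$, $LB[o_1]:=h(o_1)$. (3) Starting from $Q=\{o\}$, repeatedly remove from $Q$ an OR node $u$ of maximal depth, compute $v=\min\{\min_a(\mathrm{cost}(u,a)+LB[a]),\mathrm{cost}(u,t_u)\}$ over the AND children $a$ and terminal child $t_u$ of $u$; if $v>LB[u]$, set $LB[u]:=v$ and add to $Q$ every OR node of $\mathcal G'$ that is the parent of an AND node of $\mathcal G'$ having $u$ as child. (4) The same with $UB$ in place of $LB$, updating when $v<UB[u]$. $\mathrm{getSolution}(u)$, for an OR node $u$ with terminal child $t$: if $u$ has no AND child or $\mathrm{cost}(u,t)\le\min_a(\mathrm{cost}(u,a)+UB[a])$, return $\{u,t\}$; else, with $a^*$ an AND child attaining the minimum and children $u_0,u_1$, return $\{u,a^*\}\cup\mathrm{getSolution}(u_0)\cup\mathrm{getSolution}(u_1)$. *)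

theory Defs
  imports "HOL-Analysis.Analysis"
begin

text \<open>Binary dataset: xv i f is the value (x_i)_f (True = 1), for i in {1..nN}, f in {1..nF};
  yv i is the label y_i (True = 1).\<close>

record inst =
  nN :: nat
  nF :: nat
  xv :: "nat \<Rightarrow> nat \<Rightarrow> bool"
  yv :: "nat \<Rightarrow> bool"
  rho1 :: real
  rho0 :: real
  alpha :: real
  beta :: real

definition valid_inst :: "inst \<Rightarrow> bool" where
  "valid_inst P \<longleftrightarrow> rho1 P > 0 \<and> rho0 P > 0 \<and> 0 < alpha P \<and> alpha P < 1 \<and> beta P \<ge> 0"

definition restr :: "inst \<Rightarrow> nat set \<Rightarrow> nat \<Rightarrow> bool \<Rightarrow> nat set" where
  "restr P I f k = {i \<in> I. xv P i f = k}"

definition cnt :: "inst \<Rightarrow> bool \<Rightarrow> nat set \<Rightarrow> nat" where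
  "cnt P k I = card {i \<in> I. yv P i = k}"

definition Vs :: "inst \<Rightarrow> nat set \<Rightarrow> nat set" where
  "Vs P I = {f \<in> {1..nF P}. restr P I f False \<noteq> {} \<and> restr P I f True \<noteq> {}}"

definition ell :: "inst \<Rightarrow> nat \<Rightarrow> nat \<Rightarrow> real" where
  "ell P c1 c0 = Beta (real c1 + rho1 P) (real c0 + rho0 P) / Beta (rho1 P) (rho0 P)"

definition psplit :: "inst \<Rightarrow> nat \<Rightarrow> real" where
  "psplit P d = alpha P * (1 + real d) powr (- beta P)"

definition pleaf :: "inst \<Rightarrow> nat \<Rightarrow> nat set \<Rightarrow> real" where
  "pleaf P d I = (if Vs P I = {} then 1 else 1 - psplit P d)"

definition pinner :: "inst \<Rightarrow> nat \<Rightarrow> nat set \<Rightarrow> real" where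
  "pinner P d I = (if Vs P I = {} then 0 else psplit P d / real (card (Vs P I)))"

definition nlog :: "real \<Rightarrow> ereal" where
  "nlog p = (if p = 0 then \<infinity> else ereal (- ln p))"

datatype node = OrN "nat set" nat | TermN "nat set" nat | AndN "nat set" nat nat

fun isOr :: "node \<Rightarrow> bool" where
  "isOr (OrN _ _) = True" | "isOr _ = False"

fun isAnd :: "node \<Rightarrow> bool" where
  "isAnd (AndN _ _ _) = True" | "isAnd _ = False"

fun depth :: "node \<Rightarrow> nat" where
  "depth (OrN _ d) = d" | "depth (TermN _ d) = d" | "depth (AndN _ d _) = d"

fun termch :: "node \<Rightarrow> node" where
  "termch (OrN I d) = TermN I d" | "termch n = n"

fun child0 :: "inst \<Rightarrow> node \<Rightarrow> node" where
  "child0 P (AndN I d f) = OrN (restr P I f False) (Suc d)" | "child0 P n = n"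

fun child1 :: "inst \<Rightarrow> node \<Rightarrow> node" where
  "child1 P (AndN I d f) = OrN (restr P I f True) (Suc d)" | "child1 P n = n"

text \<open>Edges of the full graph G (OR nodes exist only for nonempty index sets).\<close>
fun gedge :: "inst \<Rightarrow> node \<Rightarrow> node \<Rightarrow> bool" where
  "gedge P (OrN I d) w \<longleftrightarrow> I \<noteq> {} \<and>
     (w = TermN I d \<or> (\<exists>f. d < nF P \<and> f \<in> Vs P I \<and> w = AndN I d f))"
| "gedge P (AndN I d f) w \<longleftrightarrow> I \<noteq> {} \<and> d < nF P \<and> f \<in> Vs P I \<and>
     (w = OrN (restr P I f False) (Suc d) \<or> w = OrN (restr P I f True) (Suc d))"
| "gedge P (TermN _ _) w \<longleftrightarrow> False"

definition root :: "inst \<Rightarrow> node" where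
  "root P = OrN {1..nN P} 0"

definition Gnodes :: "inst \<Rightarrow> node set" where
  "Gnodes P = {v. (gedge P)\<^sup>*\<^sup>* (root P) v}"

fun cost :: "inst \<Rightarrow> node \<Rightarrow> node \<Rightarrow> ereal" where
  "cost P (OrN I d) (TermN _ _) =
     nlog (pleaf P d I) + nlog (ell P (cnt P True I) (cnt P False I))"
| "cost P (OrN I d) (AndN _ _ _) = nlog (pinner P d I)"
| "cost P _ _ = 0"

fun h :: "inst \<Rightarrow> node \<Rightarrow> ereal" where
  "h P (OrN I d) = ereal (- max (ln (ell P (cnt P True I) (cnt P False I)))
        (ln (psplit P d) + ln (ell P (cnt P True I) 0) + ln (ell P 0 (cnt P False I))))"
| "h P _ = 0"

definition partial_sol :: "inst \<Rightarrow> node set \<Rightarrow> node \<Rightarrow> node set \<Rightarrow> bool" where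
  "partial_sol P G' u S \<longleftrightarrow>
     S \<subseteq> G' \<and> u \<in> S \<and> isOr u \<and>
     (\<forall>v\<in>S. (\<lambda>a b. gedge P a b \<and> a \<in> S \<and> b \<in> S)\<^sup>*\<^sup>* u v) \<and>
     (\<forall>a\<in>S. isAnd a \<longrightarrow> {w. gedge P a w} \<subseteq> S) \<and>
     (\<forall>v\<in>S. isOr v \<longrightarrow> card {w \<in> S. gedge P v w} = 1)"

definition solcost :: "inst \<Rightarrow> node set \<Rightarrow> ereal" where
  "solcost P S = (\<Sum>(v, w) \<in> {(v, w). v \<in> S \<and> w \<in> S \<and> gedge P v w}. cost P v w)"

text \<open>LB/UB are stored for OR nodes; for AND nodes they are derived via aval.\<close>
record state =
  Gp :: "node set"
  Ex :: "node set"
  LB :: "node \<Rightarrow> ereal"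
  UB :: "node \<Rightarrow> ereal"

definition aval :: "inst \<Rightarrow> (node \<Rightarrow> ereal) \<Rightarrow> node \<Rightarrow> ereal" where
  "aval P L a = (if isAnd a then L (child0 P a) + L (child1 P a) else L a)"

definition andch :: "inst \<Rightarrow> node set \<Rightarrow> node \<Rightarrow> node set" where
  "andch P S u = {a \<in> S. isAnd a \<and> gedge P u a}"

definition init :: "inst \<Rightarrow> state" where
  "init P = \<lparr> Gp = {root P}, Ex = {},
              LB = (\<lambda>n. if n = root P then h P (root P) else 0),
              UB = (\<lambda>_. \<infinity>) \<rparr>"

text \<open>Step (1): descent from x to the selected unexpanded OR node (nondeterministic in ties).\<close>
inductive sel :: "inst \<Rightarrow> state \<Rightarrow> node \<Rightarrow> node \<Rightarrow> bool" for P s where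
  stop: "x \<notin> Ex s \<Longrightarrow> sel P s x x"
| descend: "\<lbrakk> x \<in> Ex s; a \<in> andch P (Gp s) x;
     \<forall>a' \<in> andch P (Gp s) x. cost P x a + aval P (LB s) a \<le> cost P x a' + aval P (LB s) a';
     x'' = (if UB s (child0 P a) - LB s (child0 P a) > UB s (child1 P a) - LB s (child1 P a)
            then child0 P a else child1 P a);
     sel P s x'' x' \<rbrakk> \<Longrightarrow> sel P s x x'"

definition newor :: "inst \<Rightarrow> node \<Rightarrow> node set" where
  "newor P x = {c. \<exists>a. isAnd a \<and> gedge P x a \<and> (c = child0 P a \<or> c = child1 P a)}"

definition expand :: "inst \<Rightarrow> state \<Rightarrow> node \<Rightarrow> state" where
  "expand P s x = s\<lparr> Ex := insert x (Ex s),
     Gp := Gp s \<union> {termch x} \<union> {a. isAnd a \<and> gedge P x a} \<union> newor P x,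
     LB := (\<lambda>n. if n \<in> newor P x then h P n else LB s n) \<rparr>"

text \<open>Value v computed at an OR node u in steps (3)/(4).\<close>
definition orval :: "inst \<Rightarrow> node set \<Rightarrow> (node \<Rightarrow> ereal) \<Rightarrow> node \<Rightarrow> ereal" where
  "orval P S L u = min (Inf {cost P u a + aval P L a | a. a \<in> andch P S u}) (cost P u (termch u))"

definition parents :: "inst \<Rightarrow> node set \<Rightarrow> node \<Rightarrow> node set" where
  "parents P S u = {p \<in> S. isOr p \<and> (\<exists>a \<in> S. isAnd a \<and> gedge P p a \<and> gedge P a u)}"

text \<open>One step of the queue loop of steps (3)/(4); better v old decides whether to update.\<close>
inductive prop_step :: "inst \<Rightarrow> node set \<Rightarrow> (ereal \<Rightarrow> ereal \<Rightarrow> bool)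
    \<Rightarrow> (node \<Rightarrow> ereal) \<times> node set \<Rightarrow> (node \<Rightarrow> ereal) \<times> node set \<Rightarrow> bool"
  for P S better where
  upd: "\<lbrakk> u \<in> Q; \<forall>u' \<in> Q. depth u' \<le> depth u; v = orval P S L u; better v (L u) \<rbrakk>
        \<Longrightarrow> prop_step P S better (L, Q) (L(u := v), (Q - {u}) \<union> parents P S u)"
| noupd: "\<lbrakk> u \<in> Q; \<forall>u' \<in> Q. depth u' \<le> depth u; v = orval P S L u; \<not> better v (L u) \<rbrakk>
        \<Longrightarrow> prop_step P S better (L, Q) (L, Q - {u})"

inductive iter :: "inst \<Rightarrow> state \<Rightarrow> state \<Rightarrow> bool" for P where
  "\<lbrakk> LB s (root P) < UB s (root P);
     sel P s (root P) x;
     s1 = expand P s x;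
     (prop_step P (Gp s1) (\<lambda>v old. old < v))\<^sup>*\<^sup>* (LB s1, {x}) (L2, {});
     (prop_step P (Gp s1) (\<lambda>v old. v < old))\<^sup>*\<^sup>* (UB s1, {x}) (U2, {}) \<rbrakk>
   \<Longrightarrow> iter P s (s1\<lparr> LB := L2, UB := U2 \<rparr>)"

definition bestand :: "inst \<Rightarrow> state \<Rightarrow> node \<Rightarrow> ereal" where
  "bestand P s u = Inf {cost P u a + aval P (UB s) a | a. a \<in> andch P (Gp s) u}"

inductive getSol :: "inst \<Rightarrow> state \<Rightarrow> node \<Rightarrow> node set \<Rightarrow> bool" for P s where
  leaf: "\<lbrakk> isOr u; andch P (Gp s) u = {} \<or> cost P u (termch u) \<le> bestand P s u \<rbrakk>
         \<Longrightarrow> getSol P s u {u, termch u}"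
| inner: "\<lbrakk> isOr u; \<not> (andch P (Gp s) u = {} \<or> cost P u (termch u) \<le> bestand P s u);
           a \<in> andch P (Gp s) u; cost P u a + aval P (UB s) a = bestand P s u;
           getSol P s (child0 P a) S0; getSol P s (child1 P a) S1 \<rbrakk>
         \<Longrightarrow> getSol P s u ({u, a} \<union> S0 \<union> S1)"

end

theory Submission
  imports Defs
begin

fun idx :: "node \<Rightarrow> nat set" where
  "idx (OrN I _) = I" | "idx (TermN I _) = I" | "idx (AndN I _ _) = I"

lemma gedge_props:
  assumes "gedge P v w"
  shows "idx w \<subseteq> idx v \<and> idx w \<noteq> {} \<and> depth v \<le> depth w"
  using assms by (cases v) (auto simp: restr_def Vs_def)

lemma gedge_or_src:
  assumes "gedge P v w" "isOr v"
  shows "v = OrN (idx w) (depth w) \<and> depth w = depth v \<and> \<not> isOr w \<and> (w = termch v \<or> isAnd w)"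
  using assms by (cases v) auto

lemma gedge_and_src:
  assumes "gedge P v w" "isAnd v"
  shows "isOr w \<and> depth w = Suc (depth v) \<and> (w = child0 P v \<or> w = child1 P v)"
  using assms by (cases v) auto

lemma gedge_to_or:
  assumes "gedge P v w" "isOr w"
  shows "isAnd v"
  using assms by (cases v; cases w) auto

lemma gedge_to_and:
  assumes "gedge P v w" "isAnd w"
  shows "isOr v"
  using assms by (cases v; cases w) auto

lemma gedge_term_src: "\<not> gedge P (TermN I d) w"
  by simp

lemma gedge_and_children:
  assumes "gedge P u a" "isAnd a"
  shows "gedge P a (child0 P a) \<and> gedge P a (child1 P a) \<and>
         idx (child0 P a) \<inter> idx (child1 P a) = {} \<and> child0 P a \<noteq> child1 P a \<and>
         isOr (child0 P a) \<and> isOr (child1 P a) \<and> isOr u \<and>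
         depth (child0 P a) = Suc (depth u) \<and> depth (child1 P a) = Suc (depth u) \<and>
         idx (child0 P a) \<noteq> {} \<and> idx (child1 P a) \<noteq> {} \<and> depth a = depth u"
  using assms by (cases u; cases a) (auto simp: restr_def Vs_def)

lemma reach_props:
  assumes "R\<^sup>*\<^sup>* c v" "\<And>a b. R a b \<Longrightarrow> gedge P a b" "idx c \<noteq> {}"
  shows "idx v \<subseteq> idx c \<and> idx v \<noteq> {} \<and> depth c \<le> depth v"
  using assms(1)
proof (induction rule: rtranclp_induct)
  case base then show ?case using assms(3) by simp
next
  case (step y z)
  then show ?case using gedge_props[OF assms(2)[OF step(2)]] by auto
qed

definition srel :: "inst \<Rightarrow> node set \<Rightarrow> node \<Rightarrow> node \<Rightarrow> bool" where
  "srel P S a b \<longleftrightarrow> gedge P a b \<and> a \<in> S \<and> b \<in> S"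

lemma psol_def2:
  "partial_sol P G' u S \<longleftrightarrow>
     S \<subseteq> G' \<and> u \<in> S \<and> isOr u \<and>
     (\<forall>v\<in>S. (srel P S)\<^sup>*\<^sup>* u v) \<and>
     (\<forall>a\<in>S. isAnd a \<longrightarrow> {w. gedge P a w} \<subseteq> S) \<and>
     (\<forall>v\<in>S. isOr v \<longrightarrow> card {w \<in> S. gedge P v w} = 1)"
proof -
  have "(\<lambda>a b. gedge P a b \<and> a \<in> S \<and> b \<in> S) = srel P S"
    by (auto simp: srel_def fun_eq_iff)
  then show ?thesis unfolding partial_sol_def by simp
qed

lemma srel_gedge: "srel P S a b \<Longrightarrow> gedge P a b" by (simp add: srel_def)

lemma psol_unique:
  assumes "partial_sol P G u S" "v \<in> S" "isOr v"
  shows "\<exists>w. {w' \<in> S. gedge P v w'} = {w}"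
  using assms unfolding psol_def2 by (metis card_1_singletonE)
lemma srel_mono: "S \<subseteq> S' \<Longrightarrow> srel P S a b \<Longrightarrow> srel P S' a b"
  by (auto simp: srel_def)

lemma sub_reach:
  assumes "(srel P S)\<^sup>*\<^sup>* c w"
  shows "(srel P {x \<in> S. (srel P S)\<^sup>*\<^sup>* c x})\<^sup>*\<^sup>* c w"
  using assms
proof (induction rule: rtranclp_induct)
  case base then show ?case by simp
next
  case (step y z)
  have "srel P {x \<in> S. (srel P S)\<^sup>*\<^sup>* c x} y z"
  proof -
    have "(srel P S)\<^sup>*\<^sup>* c z" using step(1,2) by (rule rtranclp.rtrancl_into_rtrancl)
    moreover have "y \<in> S" "z \<in> S" "gedge P y z" using step(2) by (auto simp: srel_def)
    ultimately show ?thesis using step(1) by (simp add: srel_def)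
  qed
  with step(3) show ?case by (rule rtranclp.rtrancl_into_rtrancl)
qed

lemma sub_psol:
  assumes ps: "partial_sol P G u S" and c: "c \<in> S" "isOr c"
  shows "partial_sol P G c {x \<in> S. (srel P S)\<^sup>*\<^sup>* c x}"
proof -
  let ?S0 = "{x \<in> S. (srel P S)\<^sup>*\<^sup>* c x}"
  have ch: "w \<in> ?S0" if "v \<in> ?S0" "gedge P v w" "w \<in> S" for v w
  proof -
    have "srel P S v w" using that by (auto simp: srel_def)
    then show ?thesis using that by (auto intro: rtranclp.rtrancl_into_rtrancl)
  qed
  have eq: "{w \<in> ?S0. gedge P v w} = {w \<in> S. gedge P v w}" if "v \<in> ?S0" for v
    using ch[OF that] by auto
  show ?thesis
    unfolding psol_def2
  proof (intro conjI ballI impI)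
    show "?S0 \<subseteq> G" using ps unfolding psol_def2 by auto
    show "c \<in> ?S0" using c by auto
    show "isOr c" using c by simp
    show "(srel P ?S0)\<^sup>*\<^sup>* c v" if "v \<in> ?S0" for v
      using that sub_reach by auto
    show "{w. gedge P a w} \<subseteq> ?S0" if "a \<in> ?S0" "isAnd a" for a
    proof
      fix w assume "w \<in> {w. gedge P a w}"
      moreover have "w \<in> S" using ps that \<open>w \<in> {w. gedge P a w}\<close> unfolding psol_def2 by auto
      ultimately show "w \<in> ?S0" using ch[OF that(1)] by auto
    qed
    show "card {w \<in> ?S0. gedge P v w} = 1" if "v \<in> ?S0" "isOr v" for v
      using eq[OF that(1)] ps that unfolding psol_def2 by auto
  qed
qed

lemma psol_decomp:
  assumes ps: "partial_sol P G u S" and a: "a \<in> S" "gedge P u a" "isAnd a"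
  shows "S = {u, a} \<union> {x \<in> S. (srel P S)\<^sup>*\<^sup>* (child0 P a) x} \<union> {x \<in> S. (srel P S)\<^sup>*\<^sup>* (child1 P a) x}
    \<and> partial_sol P G (child0 P a) {x \<in> S. (srel P S)\<^sup>*\<^sup>* (child0 P a) x}
    \<and> partial_sol P G (child1 P a) {x \<in> S. (srel P S)\<^sup>*\<^sup>* (child1 P a) x}"
proof -
  note gc = gedge_and_children[OF a(2,3)]
  have uS: "u \<in> S" "isOr u" using ps unfolding psol_def2 by auto
  have c0S: "child0 P a \<in> S" and c1S: "child1 P a \<in> S"
    using ps a gc unfolding psol_def2 by auto
  obtain w where w: "{w' \<in> S. gedge P u w'} = {w}" using psol_unique[OF ps uS] by blast
  have wa: "w = a" using w a by auto
  have cover: "v \<in> {u, a} \<union> {x \<in> S. (srel P S)\<^sup>*\<^sup>* (child0 P a) x} \<union> {x \<in> S. (srel P S)\<^sup>*\<^sup>* (child1 P a) x}"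
    if "v \<in> S" for v
  proof -
    have r: "(srel P S)\<^sup>*\<^sup>* u v" using ps that unfolding psol_def2 by auto
    show ?thesis
    proof (cases "v = u")
      case True then show ?thesis by simp
    next
      case False
      then obtain y where y: "srel P S u y" "(srel P S)\<^sup>*\<^sup>* y v"
        using r by (metis converse_rtranclpE)
      have "y = a" using y(1) w wa by (auto simp: srel_def)
      show ?thesis
      proof (cases "v = a")
        case True then show ?thesis by simp
      next
        case False
        then obtain z where z: "srel P S a z" "(srel P S)\<^sup>*\<^sup>* z v"
          using y(2) \<open>y = a\<close> by (metis converse_rtranclpE)
        have "z = child0 P a \<or> z = child1 P a"
          using gedge_and_src[OF srel_gedge[OF z(1)] a(3)] by simp
        then show ?thesis using z that by auto
      qed
    qed
  qed
  show ?thesis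
    using cover uS a(1) sub_psol[OF ps c0S] sub_psol[OF ps c1S] gc by blast
qed

lemma psol_reach_props:
  assumes "partial_sol P G c S" "v \<in> S" "idx c \<noteq> {}"
  shows "idx v \<subseteq> idx c \<and> idx v \<noteq> {} \<and> depth c \<le> depth v"
  using assms reach_props[of "srel P S" c v P] srel_gedge unfolding psol_def2 by blast

definition edges :: "inst \<Rightarrow> node set \<Rightarrow> (node \<times> node) set" where
  "edges P S = {(v, w). v \<in> S \<and> w \<in> S \<and> gedge P v w}"

lemma solcost_edges: "solcost P S = sum (\<lambda>(v,w). cost P v w) (edges P S)"
  by (simp add: solcost_def edges_def)

lemma finite_edges: "finite S \<Longrightarrow> finite (edges P S)"
  by (rule finite_subset[of _ "S \<times> S"]) (auto simp: edges_def)

lemma cost_and: "isAnd a \<Longrightarrow> cost P a w = 0"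
  by (cases a; cases w) auto
lemma psol_compose:
  assumes fin: "finite G" and uG: "u \<in> G" and aG: "a \<in> G" and ua: "gedge P u a" and aA: "isAnd a"
    and p0: "partial_sol P G (child0 P a) S0" and p1: "partial_sol P G (child1 P a) S1"
  shows "partial_sol P G u ({u, a} \<union> S0 \<union> S1) \<and>
         solcost P ({u, a} \<union> S0 \<union> S1) = cost P u a + solcost P S0 + solcost P S1"
proof -
  let ?c0 = "child0 P a" and ?c1 = "child1 P a"
  let ?S = "{u, a} \<union> S0 \<union> S1"
  note gc = gedge_and_children[OF ua aA]
  have g0: "gedge P a ?c0" and g1: "gedge P a ?c1" and dj: "idx ?c0 \<inter> idx ?c1 = {}"
    and iu: "isOr u" and dc0: "depth ?c0 = Suc (depth u)" and dc1: "depth ?c1 = Suc (depth u)"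
    and ne0: "idx ?c0 \<noteq> {}" and ne1: "idx ?c1 \<noteq> {}" and da: "depth a = depth u"
    using gc by blast+
  have r0: "idx v \<subseteq> idx ?c0 \<and> idx v \<noteq> {} \<and> depth ?c0 \<le> depth v" if "v \<in> S0" for v
    using psol_reach_props[OF p0 that ne0] .
  have r1: "idx v \<subseteq> idx ?c1 \<and> idx v \<noteq> {} \<and> depth ?c1 \<le> depth v" if "v \<in> S1" for v
    using psol_reach_props[OF p1 that ne1] .
  have disj: "S0 \<inter> S1 = {}"
  proof (rule ccontr)
    assume "S0 \<inter> S1 \<noteq> {}"
    then obtain v where "v \<in> S0" "v \<in> S1" by blast
    then show False using r0 r1 dj by blast
  qed
  have uS01: "u \<notin> S0 \<union> S1" "a \<notin> S0 \<union> S1" using r0 r1 dc0 dc1 da by fastforce+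
  have c0S: "?c0 \<in> S0" and c1S: "?c1 \<in> S1" using p0 p1 unfolding psol_def2 by auto
  have S0G: "S0 \<subseteq> G" and S1G: "S1 \<subseteq> G" using p0 p1 unfolding psol_def2 by auto
  have chu: "w = a" if "w \<in> ?S" "gedge P u w" for w
  proof -
    have "depth w = depth u" "\<not> isOr w" using gedge_or_src[OF that(2) iu] by blast+
    moreover have "w \<notin> S0 \<union> S1" using r0 r1 dc0 dc1 \<open>depth w = depth u\<close> by fastforce
    ultimately show ?thesis using that(1) iu by blast
  qed
  have ch0: "w \<in> S0" if "v \<in> S0" "w \<in> ?S" "gedge P v w" for v w
  proof -
    have gp: "idx w \<subseteq> idx v \<and> idx w \<noteq> {} \<and> depth v \<le> depth w" using gedge_props[OF that(3)] .
    have "w \<noteq> u" "w \<noteq> a" using gp r0[OF that(1)] dc0 da by auto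
    moreover have "w \<notin> S1"
    proof
      assume "w \<in> S1"
      then have "idx w \<subseteq> idx ?c1" using r1 by blast
      moreover have "idx w \<subseteq> idx ?c0" using gp r0[OF that(1)] by blast
      ultimately show False using gp dj by blast
    qed
    ultimately show ?thesis using that(2) by blast
  qed
  have ch1: "w \<in> S1" if "v \<in> S1" "w \<in> ?S" "gedge P v w" for v w
  proof -
    have gp: "idx w \<subseteq> idx v \<and> idx w \<noteq> {} \<and> depth v \<le> depth w" using gedge_props[OF that(3)] .
    have "w \<noteq> u" "w \<noteq> a" using gp r1[OF that(1)] dc1 da by auto
    moreover have "w \<notin> S0"
    proof
      assume "w \<in> S0"
      then have "idx w \<subseteq> idx ?c0" using r0 by blast
      moreover have "idx w \<subseteq> idx ?c1" using gp r1[OF that(1)] by blast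
      ultimately show False using gp dj by blast
    qed
    ultimately show ?thesis using that(2) by blast
  qed
  have ps: "partial_sol P G u ?S"
    unfolding psol_def2
  proof (intro conjI ballI impI)
    show "?S \<subseteq> G" using uG aG S0G S1G by auto
    show "u \<in> ?S" by simp
    show "isOr u" using iu .
    show "(srel P ?S)\<^sup>*\<^sup>* u v" if "v \<in> ?S" for v
    proof -
      have ua': "srel P ?S u a" using ua by (simp add: srel_def)
      have a0: "srel P ?S a ?c0" "srel P ?S a ?c1" using g0 g1 c0S c1S by (auto simp: srel_def)
      have m0: "(srel P ?S)\<^sup>*\<^sup>* ?c0 v" if "v \<in> S0" for v
      proof -
        have "(srel P S0)\<^sup>*\<^sup>* ?c0 v" using p0 that unfolding psol_def2 by auto
        then show ?thesis by (rule rtranclp_mono[THEN predicate2D, rotated]) (auto intro: srel_mono)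
      qed
      have m1: "(srel P ?S)\<^sup>*\<^sup>* ?c1 v" if "v \<in> S1" for v
      proof -
        have "(srel P S1)\<^sup>*\<^sup>* ?c1 v" using p1 that unfolding psol_def2 by auto
        then show ?thesis by (rule rtranclp_mono[THEN predicate2D, rotated]) (auto intro: srel_mono)
      qed
      show ?thesis using that
      proof (elim UnE insertE)
        assume "v = u" then show ?thesis by simp
      next
        assume "v = a" then show ?thesis using ua' by auto
      next
        assume "v \<in> {}" then show ?thesis by simp
      next
        assume "v \<in> S0" then show ?thesis using ua' a0 m0
          by (meson converse_rtranclp_into_rtranclp)
      next
        assume "v \<in> S1" then show ?thesis using ua' a0 m1
          by (meson converse_rtranclp_into_rtranclp)
      qed
    qed
    show "{w. gedge P b w} \<subseteq> ?S" if "b \<in> ?S" "isAnd b" for b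
    proof
      fix w assume w: "w \<in> {w. gedge P b w}"
      show "w \<in> ?S" using that
      proof (elim UnE insertE)
        assume "b = u" then show ?thesis using that iu by (cases u) auto
      next
        assume "b = a" then show ?thesis using w gedge_and_src[OF _ aA] c0S c1S by blast
      next
        assume "b \<in> {}" then show ?thesis by simp
      next
        assume "b \<in> S0" then show ?thesis using p0 that w unfolding psol_def2 by blast
      next
        assume "b \<in> S1" then show ?thesis using p1 that w unfolding psol_def2 by blast
      qed
    qed
    show "card {w \<in> ?S. gedge P v w} = 1" if "v \<in> ?S" "isOr v" for v
      using that
    proof (elim UnE insertE)
      assume "v = u"
      then have "{w \<in> ?S. gedge P v w} = {a}" using chu ua by auto
      then show ?thesis by simp
    next
      assume "v = a" then show ?thesis using that aA by (cases a) auto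
    next
      assume "v \<in> {}" then show ?thesis by simp
    next
      assume v: "v \<in> S0"
      then have "{w \<in> ?S. gedge P v w} = {w \<in> S0. gedge P v w}" using ch0 by auto
      then show ?thesis using p0 v that unfolding psol_def2 by auto
    next
      assume v: "v \<in> S1"
      then have "{w \<in> ?S. gedge P v w} = {w \<in> S1. gedge P v w}" using ch1 by auto
      then show ?thesis using p1 v that unfolding psol_def2 by auto
    qed
  qed
  have E: "edges P ?S = {(u, a), (a, ?c0), (a, ?c1)} \<union> edges P S0 \<union> edges P S1"
  proof
    show "edges P ?S \<subseteq> {(u, a), (a, ?c0), (a, ?c1)} \<union> edges P S0 \<union> edges P S1"
    proof
      fix e assume e: "e \<in> edges P ?S"
      then obtain v w where vw: "e = (v, w)" "v \<in> ?S" "w \<in> ?S" "gedge P v w"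
        by (auto simp: edges_def)
      show "e \<in> {(u, a), (a, ?c0), (a, ?c1)} \<union> edges P S0 \<union> edges P S1"
        using vw(2)
      proof (elim UnE insertE)
        assume "v = u" then show ?thesis using chu vw by auto
      next
        assume "v = a" then show ?thesis using gedge_and_src[OF _ aA] vw by auto
      next
        assume "v \<in> {}" then show ?thesis by simp
      next
        assume "v \<in> S0" then show ?thesis using ch0 vw by (auto simp: edges_def)
      next
        assume "v \<in> S1" then show ?thesis using ch1 vw by (auto simp: edges_def)
      qed
    qed
    show "{(u, a), (a, ?c0), (a, ?c1)} \<union> edges P S0 \<union> edges P S1 \<subseteq> edges P ?S"
      using ua g0 g1 c0S c1S by (auto simp: edges_def)
  qed
  have finS0: "finite S0" "finite S1" using fin S0G S1G finite_subset by auto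
  have d1: "{(u, a), (a, ?c0), (a, ?c1)} \<inter> (edges P S0 \<union> edges P S1) = {}"
    using uS01 by (auto simp: edges_def)
  have d2: "edges P S0 \<inter> edges P S1 = {}" using disj by (auto simp: edges_def)
  have ua_ne: "u \<noteq> a" using iu aA by (cases a) auto
  have c01: "?c0 \<noteq> ?c1" using gc by blast
  have "solcost P ?S = sum (\<lambda>(v,w). cost P v w) ({(u, a), (a, ?c0), (a, ?c1)} \<union> (edges P S0 \<union> edges P S1))"
    unfolding solcost_edges E by (simp add: Un_assoc)
  also have "\<dots> = sum (\<lambda>(v,w). cost P v w) {(u, a), (a, ?c0), (a, ?c1)} +
      (sum (\<lambda>(v,w). cost P v w) (edges P S0) + sum (\<lambda>(v,w). cost P v w) (edges P S1))"
  proof -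
    have f0: "finite (edges P S0)" "finite (edges P S1)" using finite_edges finS0 by auto
    have "finite (edges P S0 \<union> edges P S1)" using f0 by simp
    then have "sum (\<lambda>(v,w). cost P v w) ({(u, a), (a, ?c0), (a, ?c1)} \<union> (edges P S0 \<union> edges P S1)) =
      sum (\<lambda>(v,w). cost P v w) {(u, a), (a, ?c0), (a, ?c1)} + sum (\<lambda>(v,w). cost P v w) (edges P S0 \<union> edges P S1)"
      using d1 by (intro sum.union_disjoint) auto
    moreover have "sum (\<lambda>(v,w). cost P v w) (edges P S0 \<union> edges P S1) =
       sum (\<lambda>(v,w). cost P v w) (edges P S0) + sum (\<lambda>(v,w). cost P v w) (edges P S1)"
      using d2 f0 by (intro sum.union_disjoint) auto
    ultimately show ?thesis by simp
  qed
  also have "sum (\<lambda>(v,w). cost P v w) {(u, a), (a, ?c0), (a, ?c1)} = cost P u a"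
    using ua_ne c01 by (simp add: cost_and[OF aA])
  finally have "solcost P ?S = cost P u a + solcost P S0 + solcost P S1"
    by (simp add: solcost_edges add.assoc)
  with ps show ?thesis by simp
qed

lemma psol_leaf:
  assumes "u \<in> G" "termch u \<in> G" "isOr u" "idx u \<noteq> {}"
  shows "partial_sol P G u {u, termch u} \<and> solcost P {u, termch u} = cost P u (termch u)"
proof -
  obtain I d where u: "u = OrN I d" using assms(3) by (cases u) auto
  have I: "I \<noteq> {}" using assms(4) u by simp
  have g: "gedge P u (termch u)" using u I by simp
  have ps: "partial_sol P G u {u, termch u}"
    unfolding psol_def2
  proof (intro conjI ballI impI)
    show "{u, termch u} \<subseteq> G" using assms by auto
    show "(srel P {u, termch u})\<^sup>*\<^sup>* u v" if "v \<in> {u, termch u}" for v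
      using that g by (auto simp: srel_def)
    show "{w. gedge P a w} \<subseteq> {u, termch u}" if "a \<in> {u, termch u}" "isAnd a" for a
      using that u by auto
    show "card {w \<in> {u, termch u}. gedge P v w} = 1" if "v \<in> {u, termch u}" "isOr v" for v
    proof -
      have "v = u" using that u by auto
      moreover have "{w \<in> {u, termch u}. gedge P u w} = {termch u}" using g u by auto
      ultimately show ?thesis by simp
    qed
  qed (use u in auto)
  have "edges P {u, termch u} = {(u, termch u)}" using g u by (auto simp: edges_def)
  then show ?thesis using ps by (simp add: solcost_edges)
qed

lemma psol_term_only:
  assumes ps: "partial_sol P G u S" and t: "termch u \<in> S" "gedge P u (termch u)"
  shows "S = {u, termch u}"
proof -
  have uS: "u \<in> S" "isOr u" using ps unfolding psol_def2 by auto
  obtain w where w: "{w' \<in> S. gedge P u w'} = {w}" using psol_unique[OF ps uS] by blast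
  have wt: "w = termch u" using w t by auto
  have "v \<in> {u, termch u}" if "v \<in> S" for v
  proof -
    have r: "(srel P S)\<^sup>*\<^sup>* u v" using ps that unfolding psol_def2 by auto
    show ?thesis
    proof (cases "v = u")
      case False
      then obtain y where y: "srel P S u y" "(srel P S)\<^sup>*\<^sup>* y v"
        using r by (metis converse_rtranclpE)
      have "y = termch u" using y(1) w wt by (auto simp: srel_def)
      moreover obtain I d where "u = OrN I d" using uS by (cases u) auto
      ultimately have "v = y" using y(2)
        by (metis converse_rtranclpE gedge_term_src srel_gedge termch.simps(1))
      then show ?thesis using \<open>y = termch u\<close> by simp
    qed simp
  qed
  then show ?thesis using uS t by auto
qed
definition good :: "inst \<Rightarrow> node set \<Rightarrow> node set \<Rightarrow> (node \<Rightarrow> ereal) \<Rightarrow> bool" where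
  "good P G E U \<longleftrightarrow> finite G \<and> E \<subseteq> G \<and>
     (\<forall>v w. isOr v \<longrightarrow> gedge P v w \<longrightarrow> w \<in> G \<longrightarrow> v \<in> E) \<and>
     (\<forall>v\<in>E. \<forall>w. gedge P v w \<longrightarrow> w \<in> G) \<and>
     (\<forall>a\<in>G. isAnd a \<longrightarrow> child0 P a \<in> G \<and> child1 P a \<in> G) \<and>
     (\<forall>v. v \<notin> E \<longrightarrow> U v = \<infinity>) \<and>
     (\<forall>v\<in>E. U v = orval P G U v)"

lemma orval_le_term: "orval P S L u \<le> cost P u (termch u)"
  by (simp add: orval_def)

lemma orval_le_and: "a \<in> andch P S u \<Longrightarrow> orval P S L u \<le> cost P u a + aval P L a"
  unfolding orval_def by (rule min.coboundedI1) (auto intro: Inf_lower)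

lemma aval_and: "isAnd a \<Longrightarrow> aval P L a = L (child0 P a) + L (child1 P a)"
  by (simp add: aval_def)

lemma andch_iff: "a \<in> andch P S u \<longleftrightarrow> a \<in> S \<and> isAnd a \<and> gedge P u a"
  by (simp add: andch_def)

lemma gedge_and_depth: "gedge P u a \<Longrightarrow> isAnd a \<Longrightarrow> depth u < nF P"
  by (cases u; cases a) auto

lemma opt:
  assumes g: "good P G E U"
  shows "partial_sol P G u S \<Longrightarrow> U u \<le> solcost P S"
proof (induction "card S" arbitrary: u S rule: less_induct)
  case less
  note ps = less.prems
  have fin: "finite G" using g by (simp add: good_def)
  have uS: "u \<in> S" "isOr u" and SG: "S \<subseteq> G" using ps unfolding psol_def2 by auto
  have finS: "finite S" using fin SG finite_subset by auto
  obtain w where w: "{w' \<in> S. gedge P u w'} = {w}" using psol_unique[OF ps uS] by blast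
  have wS: "w \<in> S" "gedge P u w" using w by auto
  have uE: "u \<in> E" using g uS(2) wS SG unfolding good_def by blast
  have Uu: "U u = orval P G U u" using g uE unfolding good_def by blast
  have "w = termch u \<or> isAnd w" using gedge_or_src[OF wS(2) uS(2)] by blast
  then show ?case
  proof
    assume wt: "w = termch u"
    have "S = {u, termch u}" using psol_term_only[OF ps] wS wt by simp
    moreover have "idx u \<noteq> {}" using wS(2) uS(2) by (cases u) auto
    ultimately have "solcost P S = cost P u (termch u)"
      using psol_leaf[of u G P] SG uS wS wt by auto
    then show ?thesis using Uu orval_le_term by metis
  next
    assume aA: "isAnd w"
    let ?S0 = "{x \<in> S. (srel P S)\<^sup>*\<^sup>* (child0 P w) x}"
    let ?S1 = "{x \<in> S. (srel P S)\<^sup>*\<^sup>* (child1 P w) x}"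
    note dec = psol_decomp[OF ps wS aA]
    note gc = gedge_and_children[OF wS(2) aA]
    have dc0: "depth (child0 P w) = Suc (depth u)" and dc1: "depth (child1 P w) = Suc (depth u)"
      and ne0: "idx (child0 P w) \<noteq> {}" and ne1: "idx (child1 P w) \<noteq> {}" using gc by blast+
    have p0: "partial_sol P G (child0 P w) ?S0" and p1: "partial_sol P G (child1 P w) ?S1"
      using dec by blast+
    have u0: "u \<notin> ?S0" using psol_reach_props[OF p0 _ ne0] dc0 by fastforce
    have u1: "u \<notin> ?S1" using psol_reach_props[OF p1 _ ne1] dc1 by fastforce
    have c0: "card ?S0 < card S" using u0 uS finS by (intro psubset_card_mono) auto
    have c1: "card ?S1 < card S" using u1 uS finS by (intro psubset_card_mono) auto
    have IH0: "U (child0 P w) \<le> solcost P ?S0" using less.hyps[OF c0 p0] .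
    have IH1: "U (child1 P w) \<le> solcost P ?S1" using less.hyps[OF c1 p1] .
    have wG: "w \<in> G" using wS SG by auto
    have comp: "solcost P ({u, w} \<union> ?S0 \<union> ?S1) = cost P u w + solcost P ?S0 + solcost P ?S1"
      using psol_compose[OF fin _ wG wS(2) aA p0 p1] uS SG by blast
    have Seq: "S = {u, w} \<union> ?S0 \<union> ?S1" using dec by blast
    have "U u \<le> cost P u w + aval P U w"
      using Uu orval_le_and[of w P G u U] wG aA wS by (simp add: andch_iff)
    also have "\<dots> = cost P u w + U (child0 P w) + U (child1 P w)"
      using aval_and[OF aA] by (simp add: add.assoc)
    also have "\<dots> \<le> cost P u w + solcost P ?S0 + solcost P ?S1"
      using IH0 IH1 by (intro add_mono) auto
    also have "\<dots> = solcost P S" using comp Seq by simp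
    finally show ?thesis .
  qed
qed

lemma ereal_sum_fin: "(x::ereal) + y < \<infinity> \<Longrightarrow> x < \<infinity> \<and> y < \<infinity>"
  by (cases x; cases y) auto

lemma getSol_correct:
  assumes g: "good P (Gp s) (Ex s) (UB s)"
  shows "getSol P s u S \<Longrightarrow> u \<in> Ex s \<Longrightarrow> idx u \<noteq> {} \<Longrightarrow>
         partial_sol P (Gp s) u S \<and> solcost P S = UB s u"
proof (induction rule: getSol.induct)
  case (leaf u)
  have uG: "u \<in> Gp s" using g leaf unfolding good_def by blast
  obtain I d where u: "u = OrN I d" using leaf by (cases u) auto
  have gt: "gedge P u (termch u)" using u leaf by simp
  have tG: "termch u \<in> Gp s" using g leaf gt unfolding good_def by blast
  have Uu: "UB s u = orval P (Gp s) (UB s) u" using g leaf unfolding good_def by blast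
  have ob: "orval P (Gp s) (UB s) u = min (bestand P s u) (cost P u (termch u))"
    by (simp add: orval_def bestand_def)
  have "min (bestand P s u) (cost P u (termch u)) = cost P u (termch u)"
    using leaf(2) by (auto simp: bestand_def min_def top_unique)
  then show ?case using psol_leaf[OF uG tG leaf(1) leaf(4)] Uu ob by simp
next
  case (inner u a S0 S1)
  let ?c0 = "child0 P a" and ?c1 = "child1 P a"
  have aA: "isAnd a" "gedge P u a" "a \<in> Gp s" using inner(3) by (auto simp: andch_iff)
  note gc = gedge_and_children[OF aA(2) aA(1)]
  have ne0: "idx ?c0 \<noteq> {}" and ne1: "idx ?c1 \<noteq> {}" using gc by blast+
  have Uu: "UB s u = orval P (Gp s) (UB s) u" using g inner unfolding good_def by blast
  have ob: "orval P (Gp s) (UB s) u = min (bestand P s u) (cost P u (termch u))"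
    by (simp add: orval_def bestand_def)
  have lt: "bestand P s u < cost P u (termch u)" using inner(2) by auto
  have Uu2: "UB s u = bestand P s u" using Uu ob lt by simp
  have be: "bestand P s u = cost P u a + (UB s ?c0 + UB s ?c1)"
    using inner(4) aval_and[OF aA(1)] by simp
  have "cost P u a + (UB s ?c0 + UB s ?c1) < \<infinity>"
    using be lt less_le_trans[of "bestand P s u" "cost P u (termch u)" \<infinity>] by simp
  then have fin: "UB s ?c0 < \<infinity>" "UB s ?c1 < \<infinity>" using ereal_sum_fin by blast+
  have E0: "?c0 \<in> Ex s" "?c1 \<in> Ex s" using fin g unfolding good_def by force+
  have IH0: "partial_sol P (Gp s) ?c0 S0 \<and> solcost P S0 = UB s ?c0" using inner.IH(1)[OF E0(1) ne0] .
  have IH1: "partial_sol P (Gp s) ?c1 S1 \<and> solcost P S1 = UB s ?c1" using inner.IH(2)[OF E0(2) ne1] .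
  have uG: "u \<in> Gp s" using g inner unfolding good_def by blast
  have fG: "finite (Gp s)" using g unfolding good_def by blast
  note comp = psol_compose[OF fG uG aA(3) aA(2) aA(1), of S0 S1]
  show ?case using comp IH0 IH1 Uu2 be by (simp add: add.assoc)
qed

lemma getSol_exists:
  assumes fG: "finite (Gp s)"
  shows "isOr u \<Longrightarrow> \<exists>S. getSol P s u S"
proof (induction "nF P - depth u" arbitrary: u rule: less_induct)
  case less
  show ?case
  proof (cases "andch P (Gp s) u = {} \<or> cost P u (termch u) \<le> bestand P s u")
    case True
    then show ?thesis using getSol.leaf[OF less.prems] by blast
  next
    case False
    let ?f = "\<lambda>a. cost P u a + aval P (UB s) a"
    have ne: "andch P (Gp s) u \<noteq> {}" using False by blast
    have fa: "finite (andch P (Gp s) u)" using fG by (simp add: andch_def)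
    have bi: "bestand P s u = Inf (?f ` andch P (Gp s) u)"
      unfolding bestand_def by (simp add: Setcompr_eq_image)
    have "Inf (?f ` andch P (Gp s) u) \<in> ?f ` andch P (Gp s) u"
      using fa ne by (simp add: cInf_eq_Min)
    then obtain a where a: "a \<in> andch P (Gp s) u" "?f a = bestand P s u" using bi by auto
    have aA: "isAnd a" "gedge P u a" using a by (auto simp: andch_iff)
    note gc = gedge_and_children[OF aA(2) aA(1)]
    have dl: "depth u < nF P" using gedge_and_depth[OF aA(2) aA(1)] .
    have o0: "isOr (child0 P a)" "isOr (child1 P a)" and
      d0: "depth (child0 P a) = Suc (depth u)" "depth (child1 P a) = Suc (depth u)" using gc by blast+
    obtain S0 where S0: "getSol P s (child0 P a) S0" using less.hyps[of "child0 P a"] o0 d0 dl by force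
    obtain S1 where S1: "getSol P s (child1 P a) S1" using less.hyps[of "child1 P a"] o0 d0 dl by force
    show ?thesis using getSol.inner[OF less.prems False a S0 S1] by blast
  qed
qed
lemma orval_mono:
  assumes "\<And>v. L v \<le> L' v"
  shows "orval P S L u \<le> orval P S L' u"
proof -
  have "Inf {cost P u a + aval P L a | a. a \<in> andch P S u} \<le> Inf {cost P u a + aval P L' a | a. a \<in> andch P S u}"
  proof (rule Inf_mono)
    fix y assume "y \<in> {cost P u a + aval P L' a | a. a \<in> andch P S u}"
    then obtain a where a: "a \<in> andch P S u" "y = cost P u a + aval P L' a" by blast
    have "aval P L a \<le> aval P L' a" using assms by (simp add: aval_def add_mono)
    then have "cost P u a + aval P L a \<le> y" using a by (simp add: add_mono)
    then show "\<exists>x\<in>{cost P u a + aval P L a | a. a \<in> andch P S u}. x \<le> y" using a by blast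
  qed
  then show ?thesis unfolding orval_def by (rule min.mono) simp
qed

lemma orval_cong:
  assumes "\<And>a. a \<in> andch P S u \<Longrightarrow> L (child0 P a) = L' (child0 P a) \<and> L (child1 P a) = L' (child1 P a)"
  shows "orval P S L u = orval P S L' u"
proof -
  have "{cost P u a + aval P L a | a. a \<in> andch P S u} = {cost P u a + aval P L' a | a. a \<in> andch P S u}"
  proof -
    have "cost P u a + aval P L a = cost P u a + aval P L' a" if "a \<in> andch P S u" for a
      using assms[OF that] that by (simp add: aval_def andch_iff)
    then have "(\<lambda>a. cost P u a + aval P L a) ` andch P S u = (\<lambda>a. cost P u a + aval P L' a) ` andch P S u"
      by (rule image_cong[OF refl])
    then show ?thesis by (simp add: Setcompr_eq_image)
  qed
  then show ?thesis by (simp add: orval_def)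
qed

definition Jp :: "inst \<Rightarrow> node set \<Rightarrow> node set \<Rightarrow> (node \<Rightarrow> ereal) \<times> node set \<Rightarrow> bool" where
  "Jp P G E x \<longleftrightarrow> snd x \<subseteq> E \<and> (\<forall>v. v \<notin> E \<longrightarrow> fst x v = \<infinity>) \<and>
     (\<forall>v\<in>E. orval P G (fst x) v \<le> fst x v) \<and> (\<forall>v\<in>E - snd x. fst x v = orval P G (fst x) v)"

lemma prop_step_inv:
  assumes EG: "E \<subseteq> G" and i3: "\<forall>v w. isOr v \<longrightarrow> gedge P v w \<longrightarrow> w \<in> G \<longrightarrow> v \<in> E"
    and st: "prop_step P G (\<lambda>v old. v < old) x y" and J: "Jp P G E x"
  shows "Jp P G E y"
  using st
proof cases
  case (upd u Q v L)
  let ?L' = "L(u := v)"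
  have uE: "u \<in> E" using J upd by (auto simp: Jp_def)
  have J2: "\<forall>v. v \<notin> E \<longrightarrow> L v = \<infinity>" and J3: "\<forall>v\<in>E. orval P G L v \<le> L v"
    and J4: "\<forall>v\<in>E - Q. L v = orval P G L v" and J1: "Q \<subseteq> E" using J upd by (auto simp: Jp_def)
  have par: "parents P G u \<subseteq> E"
    using i3 by (auto simp: parents_def)
  have self: "orval P G ?L' u = orval P G L u"
  proof (rule orval_cong[symmetric])
    fix a assume a: "a \<in> andch P G u"
    then have "isAnd a" "gedge P u a" by (auto simp: andch_iff)
    note gc = gedge_and_children[OF this(2) this(1)]
    have "child0 P a \<noteq> u" "child1 P a \<noteq> u" using gc by (metis Suc_n_not_n)+
    then show "L (child0 P a) = ?L' (child0 P a) \<and> L (child1 P a) = ?L' (child1 P a)" by simp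
  qed
  have other: "orval P G ?L' w = orval P G L w" if "w \<in> E" "w \<notin> parents P G u" for w
  proof (rule orval_cong[symmetric])
    fix a assume a: "a \<in> andch P G w"
    then have aa: "isAnd a" "gedge P w a" "a \<in> G" by (auto simp: andch_iff)
    note gc = gedge_and_children[OF aa(2) aa(1)]
    have "child0 P a \<noteq> u"
    proof
      assume "child0 P a = u"
      then have "w \<in> parents P G u" using gc aa that(1) EG by (auto simp: parents_def)
      then show False using that(2) by simp
    qed
    moreover have "child1 P a \<noteq> u"
    proof
      assume "child1 P a = u"
      then have "w \<in> parents P G u" using gc aa that(1) EG by (auto simp: parents_def)
      then show False using that(2) by simp
    qed
    ultimately show "L (child0 P a) = ?L' (child0 P a) \<and> L (child1 P a) = ?L' (child1 P a)" by simp
  qed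
  have le: "?L' z \<le> L z" for z using upd by auto
  show ?thesis unfolding Jp_def
  proof (intro conjI allI ballI impI)
    show "snd y \<subseteq> E" using upd J1 par by auto
    show "fst y z = \<infinity>" if "z \<notin> E" for z using upd J2 that uE by auto
    show "orval P G (fst y) z \<le> fst y z" if "z \<in> E" for z
    proof (cases "z = u")
      case True then show ?thesis using upd self by simp
    next
      case False
      have "orval P G ?L' z \<le> orval P G L z" using le by (rule orval_mono)
      also have "\<dots> \<le> L z" using J3 that by blast
      finally show ?thesis using upd False by simp
    qed
    show "fst y z = orval P G (fst y) z" if "z \<in> E - snd y" for z
    proof (cases "z = u")
      case True then show ?thesis using upd self by simp
    next
      case False
      then have "z \<in> E - Q" "z \<notin> parents P G u" using that upd by auto
      then show ?thesis using J4 other[of z] upd False by simp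
    qed
  qed
next
  case (noupd u Q v L)
  have J2: "\<forall>v. v \<notin> E \<longrightarrow> L v = \<infinity>" and J3: "\<forall>v\<in>E. orval P G L v \<le> L v"
    and J4: "\<forall>v\<in>E - Q. L v = orval P G L v" and J1: "Q \<subseteq> E" using J noupd by (auto simp: Jp_def)
  have uE: "u \<in> E" using J1 noupd by auto
  have "L u = orval P G L u" using J3 uE noupd by (metis antisym not_less)
  then show ?thesis using noupd J1 J2 J3 J4 by (auto simp: Jp_def)
qed

lemma prop_inv:
  assumes EG: "E \<subseteq> G" and i3: "\<forall>v w. isOr v \<longrightarrow> gedge P v w \<longrightarrow> w \<in> G \<longrightarrow> v \<in> E"
  shows "(prop_step P G (\<lambda>v old. v < old))\<^sup>*\<^sup>* x y \<Longrightarrow> Jp P G E x \<Longrightarrow> Jp P G E y"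
proof (induction rule: rtranclp_induct)
  case base then show ?case .
next
  case (step y z) then show ?case using prop_step_inv[OF EG i3] by blast
qed

definition INV :: "inst \<Rightarrow> state \<Rightarrow> bool" where
  "INV P s \<longleftrightarrow> good P (Gp s) (Ex s) (UB s) \<and> root P \<in> Gp s"

lemma sel_props:
  assumes g: "good P (Gp s) (Ex s) (UB s)"
  shows "sel P s y x \<Longrightarrow> y \<in> Gp s \<Longrightarrow> isOr y \<Longrightarrow> x \<in> Gp s \<and> isOr x \<and> x \<notin> Ex s"
proof (induction rule: sel.induct)
  case (stop x) then show ?case by simp
next
  case (descend x a x'' x')
  have aa: "isAnd a" "gedge P x a" "a \<in> Gp s" using descend(2) by (auto simp: andch_iff)
  note gc = gedge_and_children[OF aa(2) aa(1)]
  have "child0 P a \<in> Gp s" "child1 P a \<in> Gp s" using g aa unfolding good_def by blast+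
  moreover have "isOr (child0 P a)" "isOr (child1 P a)" using gc by blast+
  ultimately have "x'' \<in> Gp s" "isOr x''" using descend(4) by auto
  then show ?case using descend.IH by blast
qed

lemma init_INV: "INV P (init P)"
proof -
  have i3: "\<forall>v w. isOr v \<longrightarrow> gedge P v w \<longrightarrow> w \<in> {root P} \<longrightarrow> v \<in> {}"
    by (auto simp: root_def dest: gedge_or_src)
  show ?thesis using i3 by (auto simp: INV_def good_def init_def root_def)
qed

lemma iter_INV:
  assumes inv: "INV P s" and it: "iter P s s'"
  shows "INV P s'"
  using it
proof cases
  case (1 x s1 L2 U2)
  have g: "good P (Gp s) (Ex s) (UB s)" and rt: "root P \<in> Gp s" using inv by (auto simp: INV_def)
  have rO: "isOr (root P)" by (simp add: root_def)
  have xp: "x \<in> Gp s" "isOr x" "x \<notin> Ex s" using sel_props[OF g 1(3) rt rO] by blast+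
  obtain I d where xd: "x = OrN I d" using xp(2) by (cases x) auto
  let ?A = "{a. isAnd a \<and> gedge P x a}"
  define G1 where "G1 = Gp s \<union> {termch x} \<union> ?A \<union> newor P x"
  define E1 where "E1 = insert x (Ex s)"
  have s1: "Gp s1 = G1" "Ex s1 = E1" "UB s1 = UB s"
    using 1(4) by (auto simp: expand_def G1_def E1_def)
  have s': "Gp s' = G1" "Ex s' = E1" "UB s' = U2" using 1(1) s1 by auto
  have Asub: "?A \<subseteq> (\<lambda>f. AndN I d f) ` {1..nF P}"
  proof
    fix a assume "a \<in> ?A"
    then show "a \<in> (\<lambda>f. AndN I d f) ` {1..nF P}" using xd by (cases a) (auto simp: Vs_def)
  qed
  have finA: "finite ?A" using Asub finite_surj by blast
  have nsub: "newor P x \<subseteq> child0 P ` ?A \<union> child1 P ` ?A" by (auto simp: newor_def)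
  have finN: "finite (newor P x)" using nsub finA finite_subset by blast
  have finG: "finite (Gp s)" using g by (simp add: good_def)
  have fin1: "finite G1" using finG finA finN by (simp add: G1_def)
  have EG: "Ex s \<subseteq> Gp s" using g by (simp add: good_def)
  have EG1: "E1 \<subseteq> G1" using EG xp by (auto simp: E1_def G1_def)
  have i3o: "\<forall>v w. isOr v \<longrightarrow> gedge P v w \<longrightarrow> w \<in> Gp s \<longrightarrow> v \<in> Ex s" using g by (simp add: good_def)
  have i4o: "\<forall>v\<in>Ex s. \<forall>w. gedge P v w \<longrightarrow> w \<in> Gp s" using g by (simp add: good_def)
  have i5o: "\<forall>a\<in>Gp s. isAnd a \<longrightarrow> child0 P a \<in> Gp s \<and> child1 P a \<in> Gp s" using g by (simp add: good_def)
  have i6o: "\<forall>v. v \<notin> Ex s \<longrightarrow> UB s v = \<infinity>" using g by (simp add: good_def)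
  have i7o: "\<forall>v\<in>Ex s. UB s v = orval P (Gp s) (UB s) v" using g by (simp add: good_def)
  have newor_or: "isOr c" if "c \<in> newor P x" for c
    using that by (auto simp: newor_def elim!: isAnd.elims)
  have i3: "\<forall>v w. isOr v \<longrightarrow> gedge P v w \<longrightarrow> w \<in> G1 \<longrightarrow> v \<in> E1"
  proof (intro allI impI)
    fix v w assume v: "isOr v" "gedge P v w" "w \<in> G1"
    note go = gedge_or_src[OF v(2) v(1)]
    show "v \<in> E1"
    proof -
      { assume "w \<in> Gp s" then have ?thesis using i3o v by (auto simp: E1_def) }
      moreover
      { assume w: "w = termch x"
        have "v = OrN (idx w) (depth w)" using go by blast
        then have ?thesis using w xd by (simp add: E1_def) }
      moreover
      { assume w: "w \<in> ?A"
        have "v = OrN (idx w) (depth w)" using go by blast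
        moreover have "x = OrN (idx w) (depth w)" using gedge_or_src[of P x w] w xp(2) by blast
        ultimately have ?thesis by (simp add: E1_def) }
      moreover
      { assume w: "w \<in> newor P x"
        then have ?thesis using newor_or[OF w] go by blast }
      ultimately show ?thesis using v(3) unfolding G1_def by blast
    qed
  qed
  have i4: "\<forall>v\<in>E1. \<forall>w. gedge P v w \<longrightarrow> w \<in> G1"
  proof (intro ballI allI impI)
    fix v w assume v: "v \<in> E1" "gedge P v w"
    show "w \<in> G1"
    proof (cases "v = x")
      case True
      then have "w = termch x \<or> isAnd w" using gedge_or_src[OF v(2)] xp(2) by blast
      then show ?thesis using v(2) True by (auto simp: G1_def)
    next
      case False
      then show ?thesis using v i4o by (auto simp: E1_def G1_def)
    qed
  qed
  have i5: "\<forall>a\<in>G1. isAnd a \<longrightarrow> child0 P a \<in> G1 \<and> child1 P a \<in> G1"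
  proof (intro ballI impI)
    fix a assume a: "a \<in> G1" "isAnd a"
    { assume "a \<in> Gp s" then have "child0 P a \<in> G1 \<and> child1 P a \<in> G1" using i5o a by (auto simp: G1_def) }
    moreover
    { assume "a \<in> ?A" then have "child0 P a \<in> G1 \<and> child1 P a \<in> G1" by (auto simp: G1_def newor_def) }
    moreover
    have "a \<noteq> termch x" using a xd by auto
    moreover
    have "a \<notin> newor P x"
    proof
      assume "a \<in> newor P x"
      then have "isOr a" by (rule newor_or)
      then show False using a(2) by (cases a) auto
    qed
    ultimately show "child0 P a \<in> G1 \<and> child1 P a \<in> G1" using a(1) unfolding G1_def by blast
  qed
  have andeq: "andch P G1 v = andch P (Gp s) v" if "v \<in> Ex s" for v
    using i4o that by (auto simp: andch_def G1_def)
  have orv: "orval P G1 L v = orval P (Gp s) L v" if "v \<in> Ex s" for v L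
    using andeq[OF that] by (simp add: orval_def)
  have J0: "Jp P G1 E1 (UB s, {x})"
    unfolding Jp_def
  proof (intro conjI allI ballI impI)
    show "snd (UB s, {x}) \<subseteq> E1" by (simp add: E1_def)
    show "fst (UB s, {x}) v = \<infinity>" if "v \<notin> E1" for v using i6o that by (auto simp: E1_def)
    show "orval P G1 (fst (UB s, {x})) v \<le> fst (UB s, {x}) v" if "v \<in> E1" for v
    proof (cases "v = x")
      case True then show ?thesis using i6o xp by simp
    next
      case False then have "v \<in> Ex s" using that by (simp add: E1_def)
      then show ?thesis using i7o orv by simp
    qed
    show "fst (UB s, {x}) v = orval P G1 (fst (UB s, {x})) v" if "v \<in> E1 - snd (UB s, {x})" for v
    proof -
      have "v \<in> Ex s" using that by (simp add: E1_def)
      then show ?thesis using i7o orv by simp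
    qed
  qed
  have pr: "(prop_step P G1 (\<lambda>v old. v < old))\<^sup>*\<^sup>* (UB s, {x}) (U2, {})"
    using 1(6) s1 by simp
  have JF: "Jp P G1 E1 (U2, {})" using prop_inv[OF EG1 i3 pr J0] .
  have "good P G1 E1 U2"
    using fin1 EG1 i3 i4 i5 JF unfolding good_def Jp_def by auto
  moreover have "root P \<in> G1" using rt by (simp add: G1_def)
  ultimately show ?thesis using s' by (simp add: INV_def)
qed

lemma reach_INV: "(iter P)\<^sup>+\<^sup>+ (init P) s \<Longrightarrow> INV P s"
proof (induction rule: tranclp_induct)
  case (base y) then show ?case using iter_INV[OF init_INV] by blast
next
  case (step y z) then show ?case using iter_INV by blast
qed

theorem lemma17:
  fixes P :: inst and s :: state and u :: node
  assumes "valid_inst P"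
    and "(iter P)\<^sup>+\<^sup>+ (init P) s"
    and "u \<in> Gp s" and "isOr u"
    and "\<exists>S. partial_sol P (Gp s) u S"
  shows "(\<exists>S. getSol P s u S) \<and>
         (\<forall>S. getSol P s u S \<longrightarrow>
              partial_sol P (Gp s) u S \<and>
              (\<forall>S'. partial_sol P (Gp s) u S' \<longrightarrow> solcost P S \<le> solcost P S'))"
proof -
  have g: "good P (Gp s) (Ex s) (UB s)" using reach_INV[OF assms(2)] by (simp add: INV_def)
  obtain S0 where ps: "partial_sol P (Gp s) u S0" using assms(5) by blast
  have uS: "u \<in> S0" "isOr u" and SG: "S0 \<subseteq> Gp s" using ps unfolding psol_def2 by auto
  obtain w where w: "{w' \<in> S0. gedge P u w'} = {w}" using psol_unique[OF ps uS] by blast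
  have wS: "w \<in> S0" "gedge P u w" using w by auto
  have uE: "u \<in> Ex s" using g uS(2) wS SG unfolding good_def by blast
  have ne: "idx u \<noteq> {}" using wS(2) uS(2) by (cases u) auto
  have fG: "finite (Gp s)" using g by (simp add: good_def)
  show ?thesis
  proof (intro conjI allI impI)
    show "\<exists>S. getSol P s u S" using getSol_exists[OF fG assms(4)] .
  next
    fix S assume gs: "getSol P s u S"
    note c = getSol_correct[OF g gs uE ne]
    show "partial_sol P (Gp s) u S" using c by blast
    show "solcost P S \<le> solcost P S'" if "partial_sol P (Gp s) u S'" for S'
      using c opt[OF g that] by simp
  qed
qed

end
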